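(* Let $\mathbb{Z}_{(p_n)}$ be an odometer with scale $(p_n)$ and let $m\in\mathbb{N}$. (i) If $\gcd(m,p_n)=1$ for all $n\in\mathbb{N}$, then $(\mathbb{Z}_{(p_n)},+\mathbf{m})$ is conjugate to $(\mathbb{Z}_{(p_n)},+\mathbf{1})$ and $\operatorname{Aut}(\mathbb{Z}_{(p_n)},+\mathbf{m})\cong\mathbb{Z}_{(p_n)}$. (ii) Suppose $\gcd(p_n,m)\neq1$ for some $n\in\mathbb{N}$. Let $m=a_1^{b_1}a_2^{b_2}\cdots a_l^{b_l}$ be the prime factorization of $m$, set $r_i=\min\{b_i,\mathbf{v}_{a_i}((p_n))\}$, $s=a_1^{r_1}\cdots a_l^{r_l}$ and $t=m/s$. Then there exists $k\in\mathbb{N}$ such that $s\mid p_k$ and $$\operatorname{Aut}(\mathbb{Z}_{(p_n)},+\mathbf{m})\subseteq\operatorname{Aut}(\mathbb{Z}_{(p_n)},+(t p_k)\mathbf{1})=\operatorname{Aut}(\mathbb{Z}_{(p_n)},+p_k\mathbf{1}).$$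
   Context: A scale is a sequence $(p_n)$ of positive integers with $p_n\mid p_{n+1}$, not eventually constant. The odometer is $\mathbb{Z}_{(p_n)}=\{(x_n)\in\prod_n\mathbb{Z}/p_n\mathbb{Z}: x_{n+1}\equiv x_n\bmod p_n\}$, a compact group; $\mathbf{1}=(1,1,\dots)$ and $\mathbf{m}=m\mathbf{1}$; $(\mathbb{Z}_{(p_n)},+\mathbf{m})$ denotes translation by $\mathbf{m}$. For a prime $p$, $\mathbf{v}_p((p_n))=\lim_n\nu_p(p_n)\in\mathbb{N}\cup\{0,\infty\}$ with $\nu_p$ the $p$-adic valuation. $\operatorname{Aut}(X,T)$ is the group of homeomorphisms of $X$ commuting with $T$. *)

theory Defs
  imports "HOL-Analysis.Analysis" "HOL-Algebra.Group" "HOL-Computational_Algebra.Primes"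
    "HOL-Library.Extended_Nat"
begin

definition is_scale :: "(nat \<Rightarrow> nat) \<Rightarrow> bool" where
  "is_scale p \<longleftrightarrow> (\<forall>n. 0 < p n) \<and> (\<forall>n. p n dvd p (Suc n)) \<and>
     \<not> (\<exists>N. \<forall>n\<ge>N. p n = p N)"

text \<open>The odometer, as a subspace of the product space nat => nat (product topology,
  each factor discrete); x n is the residue in Z/p_n Z, represented in {0..<p n}.\<close>
definition odometer :: "(nat \<Rightarrow> nat) \<Rightarrow> (nat \<Rightarrow> nat) set" where
  "odometer p = {x. \<forall>n. x n < p n \<and> x (Suc n) mod p n = x n}"

definition odometer_group :: "(nat \<Rightarrow> nat) \<Rightarrow> (nat \<Rightarrow> nat) monoid" where
  "odometer_group p = \<lparr>carrier = odometer p,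
     mult = (\<lambda>x y. (\<lambda>n. (x n + y n) mod p n)), one = (\<lambda>n. 0)\<rparr>"

definition transl :: "(nat \<Rightarrow> nat) \<Rightarrow> nat \<Rightarrow> (nat \<Rightarrow> nat) \<Rightarrow> (nat \<Rightarrow> nat)" where
  "transl p m x = (\<lambda>n. (x n + m) mod p n)"

definition Aut :: "'a::topological_space set \<Rightarrow> ('a \<Rightarrow> 'a) \<Rightarrow> ('a \<Rightarrow> 'a) set" where
  "Aut X T = {f \<in> extensional X. (\<exists>g. homeomorphism X X f g) \<and> (\<forall>x\<in>X. f (T x) = T (f x))}"

definition Aut_group :: "'a::topological_space set \<Rightarrow> ('a \<Rightarrow> 'a) \<Rightarrow> ('a \<Rightarrow> 'a) monoid" where
  "Aut_group X T = \<lparr>carrier = Aut X T, mult = (\<lambda>f g. compose X f g), one = restrict id X\<rparr>"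

text \<open>v_q((p_n)) = lim_n nu_q(p_n) in N \<union> {\<infinity>} (the sequence is nondecreasing).\<close>
definition vval :: "nat \<Rightarrow> (nat \<Rightarrow> nat) \<Rightarrow> enat" where
  "vval q p = (SUP n. enat (multiplicity q (p n)))"

end

theory Submission
  imports Defs "HOL-Number_Theory.Cong"
begin

lemma cont_local:
  fixes f :: "(nat\<Rightarrow>nat) \<Rightarrow> (nat\<Rightarrow>nat)"
  assumes "continuous_on S f" "y \<in> S"
  shows "\<exists>N. \<forall>z\<in>S. (\<forall>i\<le>N. z i = y i) \<longrightarrow> f z n = f y n"
proof -
  have c: "continuous_on S (\<lambda>x. f x n)"
    using assms(1) by (rule continuous_on_product_then_coordinatewise)
  obtain A where A: "open A" "A \<inter> S = (\<lambda>x. f x n) -` {f y n} \<inter> S"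
    using c unfolding continuous_on_open_invariant by (meson open_discrete)
  have yA: "y \<in> A" using A(2) assms(2) by blast
  have "openin (product_topology (\<lambda>i. euclidean) UNIV) A" using A(1) by (simp add: open_fun_def)
  from product_topology_open_contains_basis[OF this yA] obtain X where
    X: "y \<in> (\<Pi>\<^sub>E i\<in>UNIV. X i)" "finite {i. X i \<noteq> topspace (euclidean::nat topology)}"
       "(\<Pi>\<^sub>E i\<in>UNIV. X i) \<subseteq> A" by blast
  from X(2) obtain N where N: "\<forall>i\<in>{i. X i \<noteq> UNIV}. i \<le> N"
    using finite_nat_set_iff_bounded_le by auto
  show ?thesis
  proof (intro exI ballI impI)
    fix z assume z: "z \<in> S" "\<forall>i\<le>N. z i = y i"
    have "z \<in> (\<Pi>\<^sub>E i\<in>UNIV. X i)"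
      using X(1) N z(2) by (force simp: PiE_iff)
    then have "z \<in> A" using X(3) by blast
    then show "f z n = f y n" using A(2) z(1) by blast
  qed
qed


lemma scale_dvd:
  assumes "is_scale p" "i \<le> j" shows "p i dvd p j"
  using assms(2)
proof (induction j rule: dec_induct)
  case base then show ?case by simp
next
  case (step j) then show ?case using assms(1) unfolding is_scale_def by (meson dvd_trans)
qed

lemma scale_pos: "is_scale p \<Longrightarrow> 0 < p n" unfolding is_scale_def by blast

lemma odo_mod:
  assumes "is_scale p" "x \<in> odometer p" "i \<le> j" shows "x j mod p i = x i"
  using assms(3)
proof (induction j rule: dec_induct)
  case base then show ?case using assms(2) unfolding odometer_def by simp
next
  case (step j)
  have "x (Suc j) mod p i = (x (Suc j) mod p j) mod p i"
    using scale_dvd[OF assms(1) step(1)] by (simp add: mod_mod_cancel)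
  also have "\<dots> = x i" using assms(2) step unfolding odometer_def by simp
  finally show ?case .
qed

lemma odo_agree:
  assumes "is_scale p" "x \<in> odometer p" "z \<in> odometer p" "z N = x N" "i \<le> N"
  shows "z i = x i"
  using odo_mod[OF assms(1) assms(2) assms(5)] odo_mod[OF assms(1) assms(3) assms(5)] assms(4) by simp

lemma transl_mem:
  assumes "is_scale p" "x \<in> odometer p" shows "transl p a x \<in> odometer p"
proof -
  have "\<forall>n. (x (Suc n) + a) mod p (Suc n) mod p n = (x n + a) mod p n"
  proof
    fix n
    have d: "p n dvd p (Suc n)" using assms(1) unfolding is_scale_def by blast
    have "(x (Suc n) + a) mod p (Suc n) mod p n = (x (Suc n) + a) mod p n"
      using d by (simp add: mod_mod_cancel)
    also have "\<dots> = (x (Suc n) mod p n + a) mod p n" by (simp add: mod_add_left_eq)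
    also have "\<dots> = (x n + a) mod p n" using assms(2) unfolding odometer_def by simp
    finally show "(x (Suc n) + a) mod p (Suc n) mod p n = (x n + a) mod p n" .
  qed
  then show ?thesis using scale_pos[OF assms(1)] unfolding odometer_def transl_def by auto
qed

lemma transl_transl: "transl p a (transl p b x) = transl p (a+b) x"
  unfolding transl_def by (simp add: mod_add_right_eq add_ac)

lemma transl_0: "x \<in> odometer p \<Longrightarrow> transl p 0 x = x"
  unfolding transl_def odometer_def by auto

lemma homeo_mem: "homeomorphism X X f g \<Longrightarrow> x \<in> X \<Longrightarrow> f x \<in> X"
  unfolding homeomorphism_def by blast

lemma Aut_iter:
  assumes "is_scale p" "f \<in> Aut (odometer p) (transl p a)" "x \<in> odometer p"
  shows "f (transl p (j*a) x) = transl p (j*a) (f x)"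
proof (induction j)
  case 0
  have "f x \<in> odometer p" using assms(2,3) unfolding Aut_def using homeo_mem by blast
  then show ?case using assms(3) by (simp add: transl_0)
next
  case (Suc j)
  have "transl p (Suc j * a) x = transl p a (transl p (j*a) x)"
    by (simp add: transl_transl)
  then have "f (transl p (Suc j * a) x) = transl p a (f (transl p (j*a) x))"
    using assms(2) transl_mem[OF assms(1,3)] unfolding Aut_def by auto
  also have "\<dots> = transl p (Suc j * a) (f x)" using Suc by (simp add: transl_transl)
  finally show ?case .
qed

lemma Aut_mult:
  assumes "is_scale p" shows "Aut (odometer p) (transl p a) \<subseteq> Aut (odometer p) (transl p (j*a))"
  using Aut_iter[OF assms] unfolding Aut_def by blast

lemma Aut_key:
  assumes "is_scale p" "f \<in> Aut (odometer p) (transl p a)"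
    and jN: "\<And>N. \<exists>j. [j*a = b] (mod p N)"
  shows "f \<in> Aut (odometer p) (transl p b)"
proof -
  obtain g where hg: "homeomorphism (odometer p) (odometer p) f g"
    using assms(2) unfolding Aut_def by blast
  have cont: "continuous_on (odometer p) f" using hg unfolding homeomorphism_def by blast
  have "f (transl p b x) = transl p b (f x)" if x: "x \<in> odometer p" for x
  proof
    fix n
    define y where "y = transl p b x"
    have y: "y \<in> odometer p" unfolding y_def using transl_mem[OF assms(1) x] .
    obtain N0 where N0: "\<forall>z\<in>odometer p. (\<forall>i\<le>N0. z i = y i) \<longrightarrow> f z n = f y n"
      using cont_local[OF cont y] by blast
    define N where "N = max N0 n"
    obtain j where j: "[j*a = b] (mod p N)" using jN by blast
    define z where "z = transl p (j*a) x"
    have z: "z \<in> odometer p" unfolding z_def using transl_mem[OF assms(1) x] .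
    have "z N = y N" unfolding z_def y_def transl_def using j unfolding cong_def
      by (metis mod_add_right_eq)
    then have "\<forall>i\<le>N0. z i = y i" using odo_agree[OF assms(1) y z] N_def by auto
    then have "f z n = f y n" using N0 z by blast
    moreover have "f z = transl p (j*a) (f x)" unfolding z_def using Aut_iter[OF assms(1,2) x] .
    moreover have "[j*a = b] (mod p n)"
      using j scale_dvd[OF assms(1), of n N] N_def cong_dvd_modulus_nat by auto
    ultimately have "f y n = (f x n + b) mod p n"
      unfolding transl_def cong_def by (metis mod_add_right_eq)
    then show "f (transl p b x) n = transl p b (f x) n" unfolding y_def transl_def by simp
  qed
  then show ?thesis using assms(2) unfolding Aut_def by blast
qed


lemma coord_cont: "continuous_on S (\<lambda>x::nat\<Rightarrow>nat. \<lambda>n. F n (x n) :: nat)"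
proof (rule continuous_on_coordinatewise_then_product)
  fix n
  have "continuous_on S ((F n) \<circ> (\<lambda>x::nat\<Rightarrow>nat. x n))"
    by (rule continuous_on_compose) (auto intro: continuous_on_subset[OF continuous_on_product_coordinates])
  then show "continuous_on S (\<lambda>x. F n (x n))" by (simp add: o_def)
qed

lemma zero_mem: "is_scale p \<Longrightarrow> (\<lambda>n. 0) \<in> odometer p"
  unfolding odometer_def using scale_pos by auto

lemma add_mem:
  assumes "is_scale p" "x \<in> odometer p" "a \<in> odometer p"
  shows "(\<lambda>n. (x n + a n) mod p n) \<in> odometer p"
proof -
  have "\<forall>n. (x (Suc n) + a (Suc n)) mod p (Suc n) mod p n = (x n + a n) mod p n"
  proof
    fix n
    have d: "p n dvd p (Suc n)" using assms(1) unfolding is_scale_def by blast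
    have "(x (Suc n) + a (Suc n)) mod p (Suc n) mod p n = (x (Suc n) + a (Suc n)) mod p n"
      using d by (simp add: mod_mod_cancel)
    also have "\<dots> = (x (Suc n) mod p n + a (Suc n) mod p n) mod p n" by (simp add: mod_add_eq)
    also have "\<dots> = (x n + a n) mod p n" using assms(2,3) unfolding odometer_def by simp
    finally show "(x (Suc n) + a (Suc n)) mod p (Suc n) mod p n = (x n + a n) mod p n" .
  qed
  then show ?thesis using scale_pos[OF assms(1)] unfolding odometer_def by auto
qed

lemma Aut_all:
  assumes "is_scale p" "\<forall>n. coprime m (p n)" "f \<in> Aut (odometer p) (transl p m)"
  shows "f \<in> Aut (odometer p) (transl p b)"
proof (rule Aut_key[OF assms(1,3)])
  fix N
  obtain u where u: "[m * u = Suc 0] (mod p N)" using cong_solve_coprime_nat assms(2) by blast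
  have "[u * b * m = b] (mod p N)"
    using cong_scalar_right[OF u, of b] by (simp add: ac_simps)
  then show "\<exists>j. [j * m = b] (mod p N)" by blast
qed

lemma Aut_char:
  assumes sc: "is_scale p" and cop: "\<forall>n. coprime m (p n)" and f: "f \<in> Aut (odometer p) (transl p m)"
    and x: "x \<in> odometer p"
  shows "f x = (\<lambda>n. (x n + f (\<lambda>n. 0) n) mod p n)"
proof
  fix n
  obtain g where hg: "homeomorphism (odometer p) (odometer p) f g"
    using assms(3) unfolding Aut_def by blast
  have cont: "continuous_on (odometer p) f" using hg unfolding homeomorphism_def by blast
  obtain N0 where N0: "\<forall>z\<in>odometer p. (\<forall>i\<le>N0. z i = x i) \<longrightarrow> f z n = f x n"
    using cont_local[OF cont x] by blast
  define N where "N = max N0 n"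
  define z where "z = transl p (x N) (\<lambda>n. 0)"
  have z: "z \<in> odometer p" unfolding z_def using transl_mem[OF sc zero_mem[OF sc]] .
  have "\<forall>i\<le>N0. z i = x i" unfolding z_def transl_def using odo_mod[OF sc x] N_def by auto
  then have "f z n = f x n" using N0 z by blast
  moreover have "f z = transl p (x N) (f (\<lambda>n. 0))"
    using Aut_all[OF sc cop f, of "x N"] zero_mem[OF sc] unfolding z_def Aut_def by blast
  moreover have "x N mod p n = x n" using odo_mod[OF sc x, of n N] N_def by simp
  ultimately show "f x n = (x n + f (\<lambda>n. 0) n) mod p n"
    unfolding transl_def by (metis add.commute mod_add_right_eq)
qed

lemma neg_aux:
  fixes d P A :: nat
  assumes "d dvd P" "A \<le> P" "0 < d"
  shows "(P - A) mod d = (d - A mod d) mod d"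
proof -
  obtain k where k: "P = d * k" using assms(1) by blast
  define q r where "q = A div d" "r = A mod d"
  have A: "A = d * q + r" unfolding q_r_def by simp
  have rd: "r < d" unfolding q_r_def using assms(3) by simp
  show ?thesis
  proof (cases "r = 0")
    case True
    then have "P - A = d * (k - q)" using A k by (simp add: diff_mult_distrib2)
    then show ?thesis using True q_r_def by simp
  next
    case False
    have "d * q < d * k" using A k assms(2) False rd by linarith
    then have qk: "q < k" by simp
    have "P - A = d * (k - q - 1) + (d - r)"
    proof -
      have "k = (k - q - 1) + q + 1" using qk by simp
      then have "d * k = d * ((k - q - 1) + q + 1)" by simp
      also have "\<dots> = d * (k - q - 1) + d * q + d" by (simp add: algebra_simps)
      finally have "d * k = d * (k - q - 1) + d * q + d" .
      then show ?thesis using A k rd by linarith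
    qed
    then have "(P - A) mod d = (d - r) mod d" by simp
    then show ?thesis unfolding q_r_def by simp
  qed
qed

definition addo :: "(nat \<Rightarrow> nat) \<Rightarrow> (nat \<Rightarrow> nat) \<Rightarrow> (nat \<Rightarrow> nat) \<Rightarrow> (nat \<Rightarrow> nat)" where
  "addo p a = (\<lambda>x. \<lambda>n. (x n + a n) mod p n)"
definition nego :: "(nat \<Rightarrow> nat) \<Rightarrow> (nat \<Rightarrow> nat) \<Rightarrow> (nat \<Rightarrow> nat)" where
  "nego p a = (\<lambda>n. (p n - a n) mod p n)"

lemma neg_mem:
  assumes sc: "is_scale p" and a: "a \<in> odometer p" shows "nego p a \<in> odometer p"
proof -
  have "\<forall>n. (p (Suc n) - a (Suc n)) mod p (Suc n) mod p n = (p n - a n) mod p n"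
  proof
    fix n
    have d: "p n dvd p (Suc n)" using sc unfolding is_scale_def by blast
    have "(p (Suc n) - a (Suc n)) mod p (Suc n) mod p n = (p (Suc n) - a (Suc n)) mod p n"
      using d by (simp add: mod_mod_cancel)
    also have "\<dots> = (p n - a (Suc n) mod p n) mod p n"
      by (rule neg_aux[OF d]) (use a scale_pos[OF sc] in \<open>auto simp: odometer_def less_imp_le\<close>)
    also have "\<dots> = (p n - a n) mod p n" using a unfolding odometer_def by simp
    finally show "(p (Suc n) - a (Suc n)) mod p (Suc n) mod p n = (p n - a n) mod p n" .
  qed
  then show ?thesis using scale_pos[OF sc] unfolding odometer_def nego_def by auto
qed

lemma addo_mem: "is_scale p \<Longrightarrow> a \<in> odometer p \<Longrightarrow> x \<in> odometer p \<Longrightarrow> addo p a x \<in> odometer p"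
  unfolding addo_def by (rule add_mem)

lemma addo_cancel1:
  assumes "a \<in> odometer p" "x \<in> odometer p"
  shows "addo p (nego p a) (addo p a x) = x"
proof
  fix n
  have an: "a n < p n" "x n < p n" using assms unfolding odometer_def by auto
  have "((x n + a n) mod p n + (p n - a n) mod p n) mod p n = (x n + a n + (p n - a n)) mod p n"
    by (simp add: mod_add_eq)
  also have "\<dots> = (x n + p n) mod p n" using an by simp
  also have "\<dots> = x n" using an by simp
  finally show "addo p (nego p a) (addo p a x) n = x n" unfolding addo_def nego_def by simp
qed

lemma addo_cancel2:
  assumes "a \<in> odometer p" "x \<in> odometer p"
  shows "addo p a (addo p (nego p a) x) = x"
proof
  fix n
  have an: "a n < p n" "x n < p n" using assms unfolding odometer_def by auto
  have "((x n + (p n - a n) mod p n) mod p n + a n) mod p n = (x n + (p n - a n) + a n) mod p n"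
    by (simp add: mod_add_left_eq mod_add_right_eq)
  also have "\<dots> = (x n + p n) mod p n" using an by simp
  also have "\<dots> = x n" using an by simp
  finally show "addo p a (addo p (nego p a) x) n = x n" unfolding addo_def nego_def by simp
qed

lemma addo_homeo:
  assumes sc: "is_scale p" and a: "a \<in> odometer p"
  shows "homeomorphism (odometer p) (odometer p) (addo p a) (addo p (nego p a))"
proof (rule homeomorphismI)
  show "continuous_on (odometer p) (addo p a)" unfolding addo_def by (rule coord_cont)
  show "continuous_on (odometer p) (addo p (nego p a))" unfolding addo_def by (rule coord_cont)
  show "addo p a ` odometer p \<subseteq> odometer p" using addo_mem[OF sc a] by blast
  show "addo p (nego p a) ` odometer p \<subseteq> odometer p" using addo_mem[OF sc neg_mem[OF sc a]] by blast
qed (use addo_cancel1[OF a] addo_cancel2[OF a] in auto)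

lemma tr_Aut:
  assumes sc: "is_scale p" and a: "a \<in> odometer p"
  shows "restrict (addo p a) (odometer p) \<in> Aut (odometer p) (transl p m)"
proof -
  have h: "homeomorphism (odometer p) (odometer p) (restrict (addo p a) (odometer p)) (addo p (nego p a))"
    by (rule homeomorphism_cong[OF addo_homeo[OF sc a]]) auto
  have "restrict (addo p a) (odometer p) (transl p m x) = transl p m (restrict (addo p a) (odometer p) x)"
    if x: "x \<in> odometer p" for x
  proof -
    have "addo p a (transl p m x) = transl p m (addo p a x)"
      unfolding addo_def transl_def by (simp add: mod_add_left_eq mod_add_right_eq add_ac)
    then show ?thesis using x transl_mem[OF sc x] by simp
  qed
  then show ?thesis using h unfolding Aut_def by auto
qed

lemma iso_part:
  assumes sc: "is_scale p" and cop: "\<forall>n. coprime m (p n)"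
  shows "Aut_group (odometer p) (transl p m) \<cong> odometer_group p"
proof -
  define z :: "nat \<Rightarrow> nat" where "z = (\<lambda>n. 0)"
  have z: "z \<in> odometer p" unfolding z_def by (rule zero_mem[OF sc])
  define psi where "psi = (\<lambda>f::(nat\<Rightarrow>nat)\<Rightarrow>(nat\<Rightarrow>nat). f z)"
  have memX: "f x \<in> odometer p" if "f \<in> Aut (odometer p) (transl p m)" "x \<in> odometer p" for f x
    using that homeo_mem unfolding Aut_def by blast
  have "psi \<in> hom (Aut_group (odometer p) (transl p m)) (odometer_group p)"
  proof (rule homI)
    fix f assume "f \<in> carrier (Aut_group (odometer p) (transl p m))"
    then show "psi f \<in> carrier (odometer_group p)"
      using memX z unfolding psi_def Aut_group_def odometer_group_def by auto
  next
    fix f g assume fg: "f \<in> carrier (Aut_group (odometer p) (transl p m))"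
      "g \<in> carrier (Aut_group (odometer p) (transl p m))"
    have f: "f \<in> Aut (odometer p) (transl p m)" and g: "g \<in> Aut (odometer p) (transl p m)"
      using fg unfolding Aut_group_def by auto
    have "compose (odometer p) f g z = f (g z)" using z by (simp add: compose_def)
    also have "\<dots> = (\<lambda>n. (g z n + f z n) mod p n)"
      using Aut_char[OF sc cop f memX[OF g z]] unfolding z_def by simp
    finally show "psi (f \<otimes>\<^bsub>Aut_group (odometer p) (transl p m)\<^esub> g) =
        psi f \<otimes>\<^bsub>odometer_group p\<^esub> psi g"
      unfolding psi_def Aut_group_def odometer_group_def by (simp add: add.commute)
  qed
  moreover have "bij_betw psi (carrier (Aut_group (odometer p) (transl p m))) (carrier (odometer_group p))"
  proof (rule bij_betw_imageI)
    show "inj_on psi (carrier (Aut_group (odometer p) (transl p m)))"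
    proof (rule inj_onI)
      fix f g assume fg: "f \<in> carrier (Aut_group (odometer p) (transl p m))"
        "g \<in> carrier (Aut_group (odometer p) (transl p m))" "psi f = psi g"
      have f: "f \<in> Aut (odometer p) (transl p m)" and g: "g \<in> Aut (odometer p) (transl p m)"
        using fg unfolding Aut_group_def by auto
      show "f = g"
      proof (rule extensionalityI)
        show "f \<in> extensional (odometer p)" "g \<in> extensional (odometer p)"
          using f g unfolding Aut_def by auto
        fix x assume x: "x \<in> odometer p"
        show "f x = g x" using Aut_char[OF sc cop f x] Aut_char[OF sc cop g x] fg(3)
          unfolding psi_def z_def by simp
      qed
    qed
    show "psi ` carrier (Aut_group (odometer p) (transl p m)) = carrier (odometer_group p)"
    proof
      show "psi ` carrier (Aut_group (odometer p) (transl p m)) \<subseteq> carrier (odometer_group p)"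
        using memX z unfolding psi_def Aut_group_def odometer_group_def by auto
      show "carrier (odometer_group p) \<subseteq> psi ` carrier (Aut_group (odometer p) (transl p m))"
      proof
        fix a assume "a \<in> carrier (odometer_group p)"
        then have a: "a \<in> odometer p" unfolding odometer_group_def by simp
        have "psi (restrict (addo p a) (odometer p)) = a"
          using z a unfolding psi_def addo_def z_def odometer_def by auto
        moreover have "restrict (addo p a) (odometer p) \<in> carrier (Aut_group (odometer p) (transl p m))"
          using tr_Aut[OF sc a] unfolding Aut_group_def by simp
        ultimately show "a \<in> psi ` carrier (Aut_group (odometer p) (transl p m))" by force
      qed
    qed
  qed
  ultimately show ?thesis unfolding is_iso_def iso_def by blast
qed


lemma inv_cong:
  fixes m u v d :: nat
  assumes "[m * u = 1] (mod d)" "[m * v = 1] (mod d)" shows "[u = v] (mod d)"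
proof -
  have "[u * (m * v) = u * 1] (mod d)" using assms(2) by (rule cong_scalar_left)
  moreover have "[v * (m * u) = v * 1] (mod d)" using assms(1) by (rule cong_scalar_left)
  moreover have "u * (m * v) = v * (m * u)" by (simp add: ac_simps)
  ultimately show ?thesis by (metis cong_sym cong_trans mult_1_right)
qed

lemma mult_mem:
  assumes sc: "is_scale p" and x: "x \<in> odometer p" and c: "\<And>n. [c (Suc n) = c n] (mod p n)"
  shows "(\<lambda>n. (c n * x n) mod p n) \<in> odometer p"
proof -
  have "\<forall>n. (c (Suc n) * x (Suc n)) mod p (Suc n) mod p n = (c n * x n) mod p n"
  proof
    fix n
    have d: "p n dvd p (Suc n)" using sc unfolding is_scale_def by blast
    have "(c (Suc n) * x (Suc n)) mod p (Suc n) mod p n = (c (Suc n) * x (Suc n)) mod p n"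
      using d by (simp add: mod_mod_cancel)
    also have "\<dots> = (c (Suc n) mod p n * (x (Suc n) mod p n)) mod p n" by (simp add: mod_mult_eq)
    also have "\<dots> = (c n mod p n * (x n mod p n)) mod p n"
      using x c[of n] unfolding odometer_def cong_def by simp
    also have "\<dots> = (c n * x n) mod p n" by (simp add: mod_mult_eq)
    finally show "(c (Suc n) * x (Suc n)) mod p (Suc n) mod p n = (c n * x n) mod p n" .
  qed
  then show ?thesis using scale_pos[OF sc] unfolding odometer_def by auto
qed

lemma conj_part:
  assumes sc: "is_scale p" and cop: "\<forall>n. coprime m (p n)"
  shows "\<exists>h g. homeomorphism (odometer p) (odometer p) h g \<and>
                  (\<forall>x\<in>odometer p. h (transl p m x) = transl p 1 (h x))"
proof -
  have "\<forall>n. \<exists>v. [m * v = 1] (mod p n)" using cong_solve_coprime_nat cop by auto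
  then obtain u where u: "\<And>n. [m * u n = 1] (mod p n)" by metis
  have uc: "[u (Suc n) = u n] (mod p n)" for n
  proof -
    have "[m * u (Suc n) = 1] (mod p n)"
      using u[of "Suc n"] sc unfolding is_scale_def using cong_dvd_modulus_nat by blast
    then show ?thesis using inv_cong u by blast
  qed
  define h where "h = (\<lambda>x::nat\<Rightarrow>nat. \<lambda>n. (u n * x n) mod p n)"
  define g where "g = (\<lambda>x::nat\<Rightarrow>nat. \<lambda>n. ((\<lambda>n. m) n * x n) mod p n)"
  have hX: "h x \<in> odometer p" if "x \<in> odometer p" for x
    unfolding h_def using mult_mem[OF sc that uc] .
  have gX: "g x \<in> odometer p" if "x \<in> odometer p" for x
    unfolding g_def by (rule mult_mem[OF sc that]) simp
  have gh: "g (h x) = x" if x: "x \<in> odometer p" for x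
  proof
    fix n
    have "[m * (u n * x n) = 1 * x n] (mod p n)"
      using cong_scalar_right[OF u[of n], of "x n"] by (simp add: ac_simps)
    then have "(m * (u n * x n)) mod p n = x n" using x unfolding cong_def odometer_def by simp
    then show "g (h x) n = x n" unfolding g_def h_def by (simp add: mod_mult_right_eq)
  qed
  have hg: "h (g x) = x" if x: "x \<in> odometer p" for x
  proof
    fix n
    have "[u n * (m * x n) = 1 * x n] (mod p n)"
      using cong_scalar_right[OF u[of n], of "x n"] by (simp add: ac_simps)
    then have "(u n * (m * x n)) mod p n = x n" using x unfolding cong_def odometer_def by simp
    then show "h (g x) n = x n" unfolding g_def h_def by (simp add: mod_mult_right_eq)
  qed
  have homeo: "homeomorphism (odometer p) (odometer p) h g"
  proof (rule homeomorphismI)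
    show "continuous_on (odometer p) h" unfolding h_def by (rule coord_cont)
    show "continuous_on (odometer p) g" unfolding g_def by (rule coord_cont)
  qed (use hX gX gh hg in auto)
  have comm: "h (transl p m x) = transl p 1 (h x)" for x
  proof
    fix n
    have "[u n * (x n + m) = u n * x n + 1] (mod p n)"
    proof -
      have "[u n * x n + u n * m = u n * x n + 1] (mod p n)"
        using u[of n] by (intro cong_add) (auto simp: ac_simps)
      then show ?thesis by (simp add: algebra_simps)
    qed
    then have "(u n * (x n + m)) mod p n = (u n * x n + 1) mod p n" unfolding cong_def .
    then show "h (transl p m x) n = transl p 1 (h x) n"
      unfolding h_def transl_def by (simp add: mod_mult_right_eq mod_add_left_eq mod_Suc_eq)
  qed
  show ?thesis using homeo comm by blast
qed


lemma exists_ge: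
  assumes "enat E \<le> (SUP n. enat (g n))" shows "\<exists>n. E \<le> g n"
proof (cases "E = 0")
  case False
  then have "enat (E - 1) < (SUP n. enat (g n))" using assms
    by (metis diff_less enat_ord_simps(2) le_less_trans less_numeral_extra(1) neq0_conv order_less_le_trans)
  then obtain n where "enat (E - 1) < enat (g n)" by (auto simp: less_SUP_iff)
  then have "E \<le> g n" using False by simp
  then show ?thesis by blast
qed auto

lemma mult_mono_scale:
  assumes "is_scale p" "i \<le> j" shows "multiplicity q (p i) \<le> multiplicity q (p j)"
  using dvd_imp_multiplicity_le[OF scale_dvd[OF assms]] scale_pos[OF assms(1), of j] by simp

lemma stab_one:
  fixes q m :: nat
  assumes sc: "is_scale p"
  defines "E \<equiv> the_enat (min (enat (multiplicity q m)) (vval q p))"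
  shows "E \<le> multiplicity q m \<and>
    (\<exists>k. \<forall>n\<ge>k. E \<le> multiplicity q (p n) \<and> (E < multiplicity q m \<longrightarrow> multiplicity q (p n) = E))"
proof -
  define B where "B = multiplicity q m"
  have mn: "min (enat B) (vval q p) = enat E"
  proof -
    have "min (enat B) (vval q p) \<le> enat B" by simp
    then obtain V where "min (enat B) (vval q p) = enat V" by (cases "min (enat B) (vval q p)") auto
    then show ?thesis unfolding E_def B_def by simp
  qed
  have EB: "E \<le> B" using mn by (metis enat_ord_simps(1) min.cobounded1)
  have Ev: "enat E \<le> vval q p" using mn by (metis min.cobounded2)
  then obtain k where k: "E \<le> multiplicity q (p k)"
    using exists_ge[of E "\<lambda>n. multiplicity q (p n)"] unfolding vval_def by blast
  have up: "multiplicity q (p n) \<le> E" if "E < B" for n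
  proof -
    have "min (enat B) (vval q p) \<noteq> enat B" using mn that by simp
    then have "vval q p = enat E" using mn by (metis min_def)
    moreover have "enat (multiplicity q (p n)) \<le> vval q p" unfolding vval_def by (rule SUP_upper) simp
    ultimately show ?thesis by simp
  qed
  have "\<forall>n\<ge>k. E \<le> multiplicity q (p n) \<and> (E < B \<longrightarrow> multiplicity q (p n) = E)"
    using k mult_mono_scale[OF sc] up by (meson le_antisym le_trans)
  then show ?thesis using EB unfolding B_def by blast
qed


lemma part2:
  fixes p :: "nat \<Rightarrow> nat" and m :: nat
  assumes sc: "is_scale p" and m0: "0 < m"
  defines "s \<equiv> (\<Prod>q\<in>prime_factors m. q ^ the_enat (min (enat (multiplicity q m)) (vval q p)))"
  defines "t \<equiv> m div s"
  shows "\<exists>k. s dvd p k \<and>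
                   Aut (odometer p) (transl p m) \<subseteq> Aut (odometer p) (transl p (t * p k)) \<and>
                   Aut (odometer p) (transl p (t * p k)) = Aut (odometer p) (transl p (p k))"
proof -
  define P where "P = prime_factors m"
  define e where "e = (\<lambda>q. the_enat (min (enat (multiplicity q m)) (vval q p)))"
  have s_def': "s = (\<Prod>q\<in>P. q ^ e q)" unfolding s_def P_def e_def by simp
  have finP: "finite P" unfolding P_def by simp
  have primeP: "\<And>q. q \<in> P \<Longrightarrow> prime q" unfolding P_def by auto
  have eB: "e q \<le> multiplicity q m" for q using stab_one[OF sc, of q m] unfolding e_def by blast
  have "\<forall>q. \<exists>k. \<forall>n\<ge>k. e q \<le> multiplicity q (p n) \<and> (e q < multiplicity q m \<longrightarrow> multiplicity q (p n) = e q)"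
    using stab_one[OF sc] unfolding e_def by blast
  then obtain K where K: "\<And>q n. n \<ge> K q \<Longrightarrow> e q \<le> multiplicity q (p n) \<and> (e q < multiplicity q m \<longrightarrow> multiplicity q (p n) = e q)"
    by metis
  define k where "k = (\<Sum>q\<in>P. K q)"
  have hk: "e q \<le> multiplicity q (p n) \<and> (e q < multiplicity q m \<longrightarrow> multiplicity q (p n) = e q)"
    if "q \<in> P" "n \<ge> k" for q n
  proof -
    have "K q \<le> k" unfolding k_def using finP that(1) by (simp add: member_le_sum)
    then show ?thesis using K that(2) by simp
  qed
  have s0: "s \<noteq> 0"
  proof -
    have "0 < (\<Prod>q\<in>P. q ^ e q)"
      by (rule prod_pos) (use primeP in \<open>simp add: prime_gt_0_nat\<close>)
    then show ?thesis unfolding s_def' by simp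
  qed
  have msm: "multiplicity q s = (if q \<in> P then e q else 0)" if "prime q" for q
    unfolding s_def' by (rule multiplicity_prod_prime_powers[OF finP primeP that])
  have sm: "s dvd m"
  proof -
    have "s dvd (\<Prod>q\<in>P. q ^ multiplicity q m)" unfolding s_def'
      by (rule prod_dvd_prod) (use eB in \<open>simp add: le_imp_power_dvd\<close>)
    then show ?thesis using prime_factorization_nat[OF m0] unfolding P_def by simp
  qed
  have spk: "s dvd p k"
  proof (rule multiplicity_le_imp_dvd[OF s0])
    fix q :: nat assume q: "prime q"
    show "multiplicity q s \<le> multiplicity q (p k)"
      using msm[OF q] hk[of q k] by auto
  qed
  have mst: "m = s * t" unfolding t_def using sm by simp
  have t0: "t \<noteq> 0" using mst m0 by auto
  have cop: "coprime t (p N div p k)" if N: "N \<ge> k" for N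
  proof (rule ccontr)
    assume "\<not> coprime t (p N div p k)"
    then have "gcd t (p N div p k) \<noteq> 1" by (simp add: coprime_iff_gcd_eq_1)
    then obtain q where q: "prime q" "q dvd gcd t (p N div p k)" using prime_factor_nat by blast
    define d where "d = p N div p k"
    have pN: "p N = p k * d" unfolding d_def using scale_dvd[OF sc N] by simp
    have d0: "d \<noteq> 0" using pN scale_pos[OF sc, of N] by auto
    have qt: "q dvd t" and qd: "q dvd d" using q(2) unfolding d_def by auto
    have qP: "q \<in> P" unfolding P_def using qt mst m0 q(1) by (auto intro!: prime_factorsI)
    have "multiplicity q m = multiplicity q s + multiplicity q t"
      using mst prime_elem_multiplicity_mult_distrib[of q s t] q(1) s0 t0 by simp
    moreover have "multiplicity q t > 0" using prime_multiplicity_gt_zero_iff[of q t] q(1) qt t0 by simp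
    ultimately have "e q < multiplicity q m" using msm[OF q(1)] qP by simp
    then have "multiplicity q (p N) = e q" "multiplicity q (p k) = e q" using hk[OF qP] N by auto
    moreover have "multiplicity q (p N) = multiplicity q (p k) + multiplicity q d"
      using pN prime_elem_multiplicity_mult_distrib[of q "p k" d] q(1) scale_pos[OF sc, of k] d0 by simp
    moreover have "multiplicity q d > 0" using prime_multiplicity_gt_zero_iff[of q d] q(1) qd d0 by simp
    ultimately show False by simp
  qed
  obtain c where c: "p k = s * c" using spk by blast
  have tpk: "t * p k = c * m" using c mst by simp
  have sub1: "Aut (odometer p) (transl p m) \<subseteq> Aut (odometer p) (transl p (t * p k))"
    unfolding tpk by (rule Aut_mult[OF sc])
  have sub2: "Aut (odometer p) (transl p (p k)) \<subseteq> Aut (odometer p) (transl p (t * p k))"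
    by (rule Aut_mult[OF sc])
  have sub3: "Aut (odometer p) (transl p (t * p k)) \<subseteq> Aut (odometer p) (transl p (p k))"
  proof
    fix f assume f: "f \<in> Aut (odometer p) (transl p (t * p k))"
    show "f \<in> Aut (odometer p) (transl p (p k))"
    proof (rule Aut_key[OF sc f])
      fix N
      show "\<exists>j. [j * (t * p k) = p k] (mod p N)"
      proof (cases "N \<le> k")
        case True
        then have "p N dvd p k" by (rule scale_dvd[OF sc])
        then have "[0 * (t * p k) = p k] (mod p N)" unfolding cong_def by simp
        then show ?thesis by blast
      next
        case False
        define d where "d = p N div p k"
        have pN: "p N = p k * d" unfolding d_def using scale_dvd[OF sc, of k N] False by simp
        have "coprime t d" using cop[of N] False unfolding d_def by simp
        then obtain v where v: "[t * v = Suc 0] (mod d)" using cong_solve_coprime_nat by blast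
        have "(p k * (t * v)) mod (p k * d) = p k * ((t * v) mod d)" by (rule mod_mult_mult1)
        also have "\<dots> = p k * (1 mod d)" using v unfolding cong_def by simp
        also have "\<dots> = (p k * 1) mod (p k * d)" by (rule mult_mod_right)
        finally have "[v * (t * p k) = p k] (mod p N)" unfolding cong_def pN by (simp add: ac_simps)
        then show ?thesis by blast
      qed
    qed
  qed
  show ?thesis using spk sub1 sub2 sub3 by blast
qed

theorem proposition3p1:
  fixes p :: "nat \<Rightarrow> nat" and m :: nat
  assumes "is_scale p" and "0 < m"
  shows "((\<forall>n. coprime m (p n)) \<longrightarrow>
           (\<exists>h g. homeomorphism (odometer p) (odometer p) h g \<and>
                  (\<forall>x\<in>odometer p. h (transl p m x) = transl p 1 (h x))) \<and>
           Aut_group (odometer p) (transl p m) \<cong> odometer_group p)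
       \<and> ((\<exists>n. \<not> coprime (p n) m) \<longrightarrow>
           (let s = (\<Prod>q\<in>prime_factors m.
                       q ^ the_enat (min (enat (multiplicity q m)) (vval q p)));
                t = m div s
            in \<exists>k. s dvd p k \<and>
                   Aut (odometer p) (transl p m) \<subseteq> Aut (odometer p) (transl p (t * p k)) \<and>
                   Aut (odometer p) (transl p (t * p k)) = Aut (odometer p) (transl p (p k))))"
  proof -
  show ?thesis unfolding Let_def
    using conj_part[OF assms(1)] iso_part[OF assms(1)] part2[OF assms] by blast
qed

end
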